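(* Let $a>0$. For every $p\in(2,+\infty)$ there exist constants $M_p,\sigma_p,\gamma_p>0$ such that for every $x_0\in C^2([0,1])$, every $(d_0,d_1)\in\mathcal{U}(x_0)$ and every $t\ge0$, the classical solution $x$ of $\partial_tx(t,z)=a\,\partial_z^2x(t,z)$ on $(0,\infty)\times(0,1)$, $x(t,0)=d_0(t)$, $x(t,1)=d_1(t)$ for $t\ge0$, $x(0,z)=x_0(z)$ for $z\in[0,1]$, satisfies $\|x[t]\|_p\le M_pe^{-\sigma_pt}\|x_0\|_p+\gamma_p\max_{0\le s\le t}|d_0(s)|+\gamma_p\max_{0\le s\le t}|d_1(s)|$.
   Context: $\mathcal{U}(x_0)$ is the set of pairs $(d_0,d_1)\in C^2(\mathbb{R}_+)\times C^2(\mathbb{R}_+)$ with $d_0(0)=x_0(0)$, $d_1(0)=x_0(1)$, and $\sup_{t\ge0}|d_0(t)|<\infty$, $\sup_{t\ge0}|d_1(t)|<\infty$; for such data the problem has a unique classical solution $x\in C^0(\mathbb{R}_+\times[0,1])\cap C^{1,2}((0,\infty)\times(0,1))$ with $x[t]:=x(t,\cdot)\in C^2([0,1])$ for all $t\ge0$. $\|g\|_p=\left(\int_0^1|g(z)|^pdz\right)^{1/p}$. *)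

theory Defs
  imports "HOL-Analysis.Analysis"
begin

definition C2_on :: "real set \<Rightarrow> (real \<Rightarrow> real) \<Rightarrow> bool" where
  "C2_on S g \<longleftrightarrow> (\<exists>g1 g2.
      continuous_on S g \<and> continuous_on S g1 \<and> continuous_on S g2 \<and>
      (\<forall>z\<in>S. (g has_real_derivative g1 z) (at z within S)) \<and>
      (\<forall>z\<in>S. (g1 has_real_derivative g2 z) (at z within S)))"

definition Lp_norm :: "real \<Rightarrow> (real \<Rightarrow> real) \<Rightarrow> real" where
  "Lp_norm p g = (integral {0..1} (\<lambda>z. \<bar>g z\<bar> powr p)) powr (1 / p)"

definition admissible :: "(real \<Rightarrow> real) \<Rightarrow> (real \<Rightarrow> real) \<Rightarrow> (real \<Rightarrow> real) \<Rightarrow> bool" where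
  "admissible x0 d0 d1 \<longleftrightarrow>
     C2_on {0..} d0 \<and> C2_on {0..} d1 \<and> d0 0 = x0 0 \<and> d1 0 = x0 1 \<and>
     bounded (d0 ` {0..}) \<and> bounded (d1 ` {0..})"

definition classical_solution ::
  "real \<Rightarrow> (real \<Rightarrow> real) \<Rightarrow> (real \<Rightarrow> real) \<Rightarrow> (real \<Rightarrow> real) \<Rightarrow> (real \<Rightarrow> real \<Rightarrow> real) \<Rightarrow> bool" where
  "classical_solution a x0 d0 d1 x \<longleftrightarrow>
     continuous_on ({0..} \<times> {0..1}) (\<lambda>(t,z). x t z) \<and>
     (\<exists>xt xz xzz.
        continuous_on ({0<..} \<times> {0<..<1}) (\<lambda>(t,z). xt t z) \<and>
        continuous_on ({0<..} \<times> {0<..<1}) (\<lambda>(t,z). xz t z) \<and>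
        continuous_on ({0<..} \<times> {0<..<1}) (\<lambda>(t,z). xzz t z) \<and>
        (\<forall>t>0. \<forall>z\<in>{0<..<1}.
           ((\<lambda>s. x s z) has_real_derivative xt t z) (at t) \<and>
           ((\<lambda>y. x t y) has_real_derivative xz t z) (at z) \<and>
           ((\<lambda>y. xz t y) has_real_derivative xzz t z) (at z) \<and>
           xt t z = a * xzz t z)) \<and>
     (\<forall>t\<ge>0. C2_on {0..1} (x t)) \<and>
     (\<forall>t\<ge>0. x t 0 = d0 t \<and> x t 1 = d1 t) \<and>
     (\<forall>z\<in>{0..1}. x 0 z = x0 z)"

end

theory Submission
  imports Defs
begin

definition yp :: "real \<Rightarrow> real \<Rightarrow> real" where "yp D s = max 0 (\<bar>s\<bar> - D)"
definition ph :: "real \<Rightarrow> real \<Rightarrow> real \<Rightarrow> real" where "ph p D s = yp D s powr p"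
definition ph1 :: "real \<Rightarrow> real \<Rightarrow> real \<Rightarrow> real" where "ph1 p D s = p * sgn s * yp D s powr (p - 1)"
definition ph2 :: "real \<Rightarrow> real \<Rightarrow> real \<Rightarrow> real" where "ph2 p D s = p * (p - 1) * yp D s powr (p - 2)"

lemma flat_deriv:
  fixes f :: "real \<Rightarrow> real"
  assumes f0: "f s0 = 0" and b: "\<And>s. \<bar>f s\<bar> \<le> C * \<bar>s - s0\<bar> powr q" and q: "q > 1"
  shows "(f has_real_derivative 0) (at s0)"
proof -
  have lim: "((\<lambda>y. \<bar>y - s0\<bar> powr (q - 1)) \<longlongrightarrow> 0) (at s0)"
    by (rule tendsto_zero_powrI) (auto intro!: tendsto_eq_intros simp: q)
  have ev: "\<forall>\<^sub>F y in at s0. norm ((f y - f s0) / (y - s0)) \<le> norm (\<bar>y - s0\<bar> powr (q - 1)) * \<bar>C\<bar>"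
  proof (rule eventually_at_topological[THEN iffD2], intro exI[of _ UNIV] conjI, simp, simp, intro ballI impI)
    fix y assume "y \<noteq> s0"
    then have pos: "\<bar>y - s0\<bar> > 0" by simp
    have "norm ((f y - f s0) / (y - s0)) = \<bar>f y\<bar> / \<bar>y - s0\<bar>" by (simp add: f0 abs_divide)
    also have "\<dots> \<le> C * \<bar>y - s0\<bar> powr q / \<bar>y - s0\<bar>"
      using b[of y] pos by (simp add: divide_right_mono)
    also have "\<dots> = C * \<bar>y - s0\<bar> powr (q - 1)"
      using pos by (simp add: powr_diff)
    also have "\<dots> \<le> norm (\<bar>y - s0\<bar> powr (q - 1)) * \<bar>C\<bar>"
      by (simp add: mult.commute mult_right_mono)
    finally show "norm ((f y - f s0) / (y - s0)) \<le> norm (\<bar>y - s0\<bar> powr (q - 1)) * \<bar>C\<bar>" .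
  qed
  show ?thesis
    unfolding has_field_derivative_iff
    by (rule tendsto_0_le[OF lim ev]) 
qed

lemma yp_nonneg: "yp D s \<ge> 0" by (simp add: yp_def)

lemma yp_lip: assumes "\<bar>s0\<bar> \<le> D" shows "\<bar>yp D s\<bar> \<le> \<bar>s - s0\<bar>"
  using assms by (auto simp: yp_def)

lemma yp_zero: assumes "\<bar>s0\<bar> \<le> D" shows "yp D s0 = 0"
  using assms by (auto simp: yp_def)

lemma ph_deriv: assumes p: "p > 2" and D: "D \<ge> 0"
  shows "(ph p D has_real_derivative ph1 p D s) (at s)"
proof -
  consider "\<bar>s\<bar> \<le> D" | "s > D" | "s < -D" by linarith
  then show ?thesis
  proof cases
    case 1
    have "(ph p D has_real_derivative 0) (at s)"
    proof (rule flat_deriv[where C=1 and q=p])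
      show "ph p D s = 0" using yp_zero[OF 1] by (simp add: ph_def)
      fix y show "\<bar>ph p D y\<bar> \<le> 1 * \<bar>y - s\<bar> powr p"
        using yp_lip[OF 1, of y] yp_nonneg[of D y] p by (simp add: ph_def powr_mono2)
    qed (use p in auto)
    then show ?thesis using yp_zero[OF 1] by (simp add: ph1_def)
  next
    case 2
    have d: "((\<lambda>y. (y - D) powr p) has_real_derivative p * (s - D) powr (p - 1) * 1) (at s)"
      by (rule DERIV_powr[THEN DERIV_cong]) (use 2 in \<open>auto intro!: derivative_eq_intros simp: powr_diff power2_eq_square\<close>)
    have e: "ph1 p D s = p * (s - D) powr (p - 1) * 1" using 2 D by (simp add: ph1_def ph2_def yp_def sgn_if)
    show ?thesis unfolding e
      apply (rule has_field_derivative_transform_within_open[OF d, of "{D<..}"])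
      using 2 D by (auto simp: ph_def ph1_def yp_def)
  next
    case 3
    have d: "((\<lambda>y. (- y - D) powr p) has_real_derivative p * (- s - D) powr (p - 1) * (-1)) (at s)"
      by (rule DERIV_powr[THEN DERIV_cong]) (use 3 in \<open>auto intro!: derivative_eq_intros simp: powr_diff power2_eq_square field_simps\<close>)
    have e: "ph1 p D s = p * (- s - D) powr (p - 1) * (-1)" using 3 D by (simp add: ph1_def ph2_def yp_def sgn_if)
    show ?thesis unfolding e
      apply (rule has_field_derivative_transform_within_open[OF d, of "{..<-D}"])
      using 3 D by (auto simp: ph_def ph1_def yp_def)
  qed
qed

lemma ph1_deriv: assumes p: "p > 2" and D: "D \<ge> 0"
  shows "(ph1 p D has_real_derivative ph2 p D s) (at s)"
proof -
  consider "\<bar>s\<bar> \<le> D" | "s > D" | "s < -D" by linarith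
  then show ?thesis
  proof cases
    case 1
    have "(ph1 p D has_real_derivative 0) (at s)"
    proof (rule flat_deriv[where C=p and q="p-1"])
      show "ph1 p D s = 0" using yp_zero[OF 1] by (simp add: ph1_def)
      fix y
      have "\<bar>ph1 p D y\<bar> \<le> p * yp D y powr (p - 1)"
        using p by (auto simp: ph1_def abs_mult sgn_if)
      also have "\<dots> \<le> p * \<bar>y - s\<bar> powr (p - 1)"
        using yp_lip[OF 1, of y] yp_nonneg[of D y] p by (intro mult_left_mono powr_mono2) auto
      finally show "\<bar>ph1 p D y\<bar> \<le> p * \<bar>y - s\<bar> powr (p - 1)" .
    qed (use p in auto)
    then show ?thesis using yp_zero[OF 1] by (simp add: ph2_def)
  next
    case 2
    have d: "((\<lambda>y. p * (y - D) powr (p - 1)) has_real_derivative p * ((p - 1) * (s - D) powr (p - 1 - 1) * 1)) (at s)"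
      by (intro DERIV_cmult DERIV_powr[THEN DERIV_cong]) (use 2 in \<open>auto intro!: derivative_eq_intros simp: powr_diff power2_eq_square\<close>)
    have e: "ph2 p D s = p * ((p - 1) * (s - D) powr (p - 1 - 1) * 1)" using 2 D by (simp add: ph1_def ph2_def yp_def sgn_if)
    show ?thesis unfolding e
      apply (rule has_field_derivative_transform_within_open[OF d, of "{D<..}"])
      using 2 D by (auto simp: ph2_def ph1_def yp_def)
  next
    case 3
    have d: "((\<lambda>y. - p * (- y - D) powr (p - 1)) has_real_derivative - p * ((p - 1) * (- s - D) powr (p - 1 - 1) * (-1))) (at s)"
      by (intro DERIV_cmult DERIV_powr[THEN DERIV_cong]) (use 3 in \<open>auto intro!: derivative_eq_intros simp: powr_diff power2_eq_square field_simps\<close>)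
    have e: "ph2 p D s = - p * ((p - 1) * (- s - D) powr (p - 1 - 1) * (-1))" using 3 D by (simp add: ph1_def ph2_def yp_def sgn_if)
    show ?thesis unfolding e
      apply (rule has_field_derivative_transform_within_open[OF d, of "{..<-D}"])
      using 3 D by (auto simp: ph2_def ph1_def yp_def)
  qed
qed



lemma ph_nonneg: "ph p D s \<ge> 0" by (simp add: ph_def)
lemma ph2_nonneg: "p > 2 \<Longrightarrow> ph2 p D s \<ge> 0" by (simp add: ph2_def)
lemma ph_zero: "\<bar>s\<bar> \<le> D \<Longrightarrow> ph p D s = 0" by (simp add: ph_def yp_zero)
lemma ph1_zero: "\<bar>s\<bar> \<le> D \<Longrightarrow> ph1 p D s = 0" by (simp add: ph1_def yp_zero)

lemma ph_le: assumes "p > 0" "D \<ge> 0" shows "ph p D s \<le> \<bar>s\<bar> powr p"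
  unfolding ph_def using assms by (intro powr_mono2) (auto simp: yp_def)

lemma abs_le_ph: assumes p: "p > 0" and D: "D > 0"
  shows "\<bar>s\<bar> powr p \<le> 2 powr p * (D powr p + ph p D s)"
proof -
  let ?y = "yp D s"
  have "\<bar>s\<bar> \<le> 2 * max D ?y" using D by (auto simp: yp_def max_def)
  then have "\<bar>s\<bar> powr p \<le> (2 * max D ?y) powr p" using p by (intro powr_mono2) auto
  also have "\<dots> = 2 powr p * max D ?y powr p" using D yp_nonneg[of D s] by (simp add: powr_mult)
  also have "max D ?y powr p \<le> D powr p + ?y powr p"
    by (cases "D \<le> ?y") (auto simp: max_def)
  then have "2 powr p * max D ?y powr p \<le> 2 powr p * (D powr p + ph p D s)"
    by (simp add: ph_def)
  finally show ?thesis .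
qed

lemma cont_ph: "p > 2 \<Longrightarrow> D \<ge> 0 \<Longrightarrow> continuous_on S (ph p D)"
  by (meson DERIV_isCont continuous_at_imp_continuous_on ph_deriv)
lemma cont_ph1: "p > 2 \<Longrightarrow> D \<ge> 0 \<Longrightarrow> continuous_on S (ph1 p D)"
  by (meson DERIV_isCont continuous_at_imp_continuous_on ph1_deriv)

lemma ptw:
  assumes p: "p > 2" and q: "\<bar>q\<bar> \<le> 1/2"
  shows "- (ph1 p D s * g * q) \<le> (1/2) * ph p D s + (1/4) * (ph2 p D s * g * g)"
proof -
  define y where "y = yp D s"
  have y0: "y \<ge> 0" by (simp add: y_def yp_nonneg)
  define u where "u = y powr (p/2)"
  define v where "v = y powr (p/2 - 1) * \<bar>g\<bar>"
  have u0: "u \<ge> 0" and v0: "v \<ge> 0" by (auto simp: u_def v_def)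
  have uv: "y powr (p - 1) * \<bar>g\<bar> = u * v"
    unfolding u_def v_def by (simp add: powr_add[symmetric] mult.assoc)
  have uu: "u * u = y powr p" unfolding u_def by (simp add: powr_add[symmetric])
  have vv: "v * v = y powr (p - 2) * (g * g)" unfolding v_def
    by (simp add: powr_add[symmetric] mult_ac abs_mult_self)
  have "- (ph1 p D s * g * q) \<le> \<bar>ph1 p D s * g * q\<bar>" by simp
  also have "\<dots> \<le> p * y powr (p - 1) * \<bar>g\<bar> * (1/2)"
    unfolding ph1_def y_def[symmetric] abs_mult using p q y0
    by (intro mult_mono) (auto simp: sgn_if)
  also have "\<dots> = (p/2) * (u * v)" using uv by (simp add: mult_ac)
  also have "\<dots> \<le> (1/2) * (u * u) + (p * p / 8) * (v * v)"
  proof -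
    have "0 \<le> (u - (p/2) * v)^2" by simp
    then show ?thesis by (simp add: power2_eq_square algebra_simps)
  qed
  also have "\<dots> \<le> (1/2) * (u * u) + (p * (p - 1) / 4) * (v * v)"
    using p v0 by (intro add_left_mono mult_right_mono) (auto simp: field_simps)
  also have "\<dots> = (1/2) * ph p D s + (1/4) * (ph2 p D s * g * g)"
    unfolding uu vv ph_def ph2_def y_def by (simp add: mult_ac)
  finally show ?thesis .
qed



lemma spatial:
  fixes X Xz Xzz :: "real \<Rightarrow> real"
  assumes p: "p > 2" and D: "D \<ge> 0" and a: "a > 0" and del: "0 < \<delta>" "\<delta> < 1/2"
    and dX: "\<And>z. z \<in> {0<..<1} \<Longrightarrow> (X has_real_derivative Xz z) (at z)"
    and dXz: "\<And>z. z \<in> {0<..<1} \<Longrightarrow> (Xz has_real_derivative Xzz z) (at z)"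
    and cXzz: "continuous_on {0<..<1} Xzz"
    and bd: "\<bar>X \<delta>\<bar> \<le> D" "\<bar>X (1 - \<delta>)\<bar> \<le> D"
  shows "integral {\<delta>..1-\<delta>} (\<lambda>z. ph1 p D (X z) * (a * Xzz z))
     \<le> - 2 * a * integral {\<delta>..1-\<delta>} (\<lambda>z. ph p D (X z))"
proof -
  have sub: "{\<delta>..1-\<delta>} \<subseteq> {0<..<1}" using del by auto
  have le: "\<delta> \<le> 1 - \<delta>" using del by simp
  have cX: "continuous_on {\<delta>..1-\<delta>} X"
    using dX sub by (meson DERIV_isCont continuous_at_imp_continuous_on subsetD)
  have cXz: "continuous_on {\<delta>..1-\<delta>} Xz"
    using dXz sub by (meson DERIV_isCont continuous_at_imp_continuous_on subsetD)
  have cXzz': "continuous_on {\<delta>..1-\<delta>} Xzz" using cXzz sub continuous_on_subset by blast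
  have cph: "continuous_on {\<delta>..1-\<delta>} (\<lambda>z. ph p D (X z))"
    using continuous_on_compose2[OF cont_ph[OF p D] cX] by auto
  have cph1: "continuous_on {\<delta>..1-\<delta>} (\<lambda>z. ph1 p D (X z))"
    using continuous_on_compose2[OF cont_ph1[OF p D] cX] by auto
  define F where "F z = ph1 p D (X z) * Xz z" for z
  define F' where "F' z = ph2 p D (X z) * Xz z * Xz z + ph1 p D (X z) * Xzz z" for z
  define G where "G z = ph p D (X z) * (z - 1/2)" for z
  define G' where "G' z = ph1 p D (X z) * Xz z * (z - 1/2) + ph p D (X z)" for z
  have hF: "(F' has_integral (F (1-\<delta>) - F \<delta>)) {\<delta>..1-\<delta>}"
  proof (rule fundamental_theorem_of_calculus[OF le])
    fix z assume z: "z \<in> {\<delta>..1-\<delta>}"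
    then have z': "z \<in> {0<..<1}" using sub by auto
    have "(F has_real_derivative F' z) (at z)"
      unfolding F_def F'_def
      by (rule DERIV_mult[OF DERIV_chain2[OF ph1_deriv[OF p D] dX[OF z']] dXz[OF z'], THEN DERIV_cong]) simp
    then show "(F has_vector_derivative F' z) (at z within {\<delta>..1-\<delta>})"
      by (simp add: has_real_derivative_iff_has_vector_derivative has_vector_derivative_at_within)
  qed
  have hG: "(G' has_integral (G (1-\<delta>) - G \<delta>)) {\<delta>..1-\<delta>}"
  proof (rule fundamental_theorem_of_calculus[OF le])
    fix z assume z: "z \<in> {\<delta>..1-\<delta>}"
    then have z': "z \<in> {0<..<1}" using sub by auto
    have "(G has_real_derivative G' z) (at z)"
      unfolding G_def G'_def
      by (rule DERIV_mult[OF DERIV_chain2[OF ph_deriv[OF p D] dX[OF z']] DERIV_diff[OF DERIV_ident DERIV_const], THEN DERIV_cong]) simp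
    then show "(G has_vector_derivative G' z) (at z within {\<delta>..1-\<delta>})"
      by (simp add: has_real_derivative_iff_has_vector_derivative has_vector_derivative_at_within)
  qed
  have F0: "F (1-\<delta>) - F \<delta> = 0" using bd by (simp add: F_def ph1_zero)
  have G0: "G (1-\<delta>) - G \<delta> = 0" using bd by (simp add: G_def ph_zero)
  have i1: "(\<lambda>z. ph1 p D (X z) * Xzz z) integrable_on {\<delta>..1-\<delta>}"
    by (intro integrable_continuous_interval continuous_on_mult cph1 cXzz')
  have i3: "(\<lambda>z. ph p D (X z)) integrable_on {\<delta>..1-\<delta>}"
    by (intro integrable_continuous_interval cph)
  have i4: "(\<lambda>z. ph1 p D (X z) * Xz z * (z - 1/2)) integrable_on {\<delta>..1-\<delta>}"
    by (intro integrable_continuous_interval continuous_on_mult cph1 cXz continuous_intros)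
  have iF: "F' integrable_on {\<delta>..1-\<delta>}" using hF by blast
  have i2: "(\<lambda>z. ph2 p D (X z) * Xz z * Xz z) integrable_on {\<delta>..1-\<delta>}"
  proof -
    have "(\<lambda>z. F' z - ph1 p D (X z) * Xzz z) integrable_on {\<delta>..1-\<delta>}"
      by (intro integrable_diff iF i1)
    then show ?thesis by (simp add: F'_def)
  qed
  define I1 where "I1 = integral {\<delta>..1-\<delta>} (\<lambda>z. ph1 p D (X z) * Xzz z)"
  define I2 where "I2 = integral {\<delta>..1-\<delta>} (\<lambda>z. ph2 p D (X z) * Xz z * Xz z)"
  define I3 where "I3 = integral {\<delta>..1-\<delta>} (\<lambda>z. ph p D (X z))"
  define I4 where "I4 = integral {\<delta>..1-\<delta>} (\<lambda>z. ph1 p D (X z) * Xz z * (z - 1/2))"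
  have e1: "I2 + I1 = 0"
  proof -
    have "integral {\<delta>..1-\<delta>} F' = 0" using hF F0 by (simp add: integral_unique)
    moreover have "integral {\<delta>..1-\<delta>} F' = I2 + I1"
      unfolding F'_def I1_def I2_def by (rule integral_add[OF i2 i1])
    ultimately show ?thesis by simp
  qed
  have e2: "I4 + I3 = 0"
  proof -
    have "integral {\<delta>..1-\<delta>} G' = 0" using hG G0 by (simp add: integral_unique)
    moreover have "integral {\<delta>..1-\<delta>} G' = I4 + I3"
      unfolding G'_def I3_def I4_def by (rule integral_add[OF i4 i3])
    ultimately show ?thesis by simp
  qed
  have e3: "- I4 \<le> (1/2) * I3 + (1/4) * I2"
  proof -
    have "integral {\<delta>..1-\<delta>} (\<lambda>z. - (ph1 p D (X z) * Xz z * (z - 1/2)))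
        \<le> integral {\<delta>..1-\<delta>} (\<lambda>z. (1/2) * ph p D (X z) + (1/4) * (ph2 p D (X z) * Xz z * Xz z))"
    proof (rule integral_le)
      show "(\<lambda>z. - (ph1 p D (X z) * Xz z * (z - 1/2))) integrable_on {\<delta>..1-\<delta>}"
        using i4 by (rule integrable_neg)
      show "(\<lambda>z. (1/2) * ph p D (X z) + (1/4) * (ph2 p D (X z) * Xz z * Xz z)) integrable_on {\<delta>..1-\<delta>}"
        by (intro integrable_add) (simp_all add: i3 i2)
      fix z assume "z \<in> {\<delta>..1-\<delta>}"
      then have "\<bar>z - 1/2\<bar> \<le> 1/2" using del by (auto simp: abs_if)
      then show "- (ph1 p D (X z) * Xz z * (z - 1/2)) \<le> (1/2) * ph p D (X z) + (1/4) * (ph2 p D (X z) * Xz z * Xz z)"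
        by (rule ptw[OF p])
    qed
    also have "\<dots> = (1/2) * I3 + (1/4) * I2"
      unfolding I2_def I3_def
      by (simp add: integral_add integrable_on_cmult_left i3 i2)
    finally show ?thesis unfolding I4_def by (simp add: integral_neg)
  qed
  have "integral {\<delta>..1-\<delta>} (\<lambda>z. ph1 p D (X z) * (a * Xzz z)) = a * I1"
    unfolding I1_def by (simp add: mult.left_commute)
  also have "\<dots> \<le> a * (- 2 * I3)"
  proof -
    have "I1 \<le> - 2 * I3" using e1 e2 e3 by linarith
    then show ?thesis using a by (intro mult_left_mono) auto
  qed
  also have "\<dots> = - 2 * a * I3" by simp
  finally show ?thesis unfolding I3_def .
qed



lemma decay:
  fixes x xt xz xzz :: "real \<Rightarrow> real \<Rightarrow> real"
  assumes p: "p > 2" and D: "D \<ge> 0" and a: "a > 0" and del: "0 < \<delta>" "\<delta> < 1/2" and T: "T \<ge> 0"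
    and cx: "continuous_on ({0..} \<times> {0..1}) (\<lambda>(t,z). x t z)"
    and cxt: "continuous_on ({0<..} \<times> {0<..<1}) (\<lambda>(t,z). xt t z)"
    and cxzz: "continuous_on ({0<..} \<times> {0<..<1}) (\<lambda>(t,z). xzz t z)"
    and der: "\<And>t z. t > 0 \<Longrightarrow> z \<in> {0<..<1} \<Longrightarrow>
           ((\<lambda>s. x s z) has_real_derivative xt t z) (at t) \<and>
           ((\<lambda>y. x t y) has_real_derivative xz t z) (at z) \<and>
           ((\<lambda>y. xz t y) has_real_derivative xzz t z) (at z) \<and>
           xt t z = a * xzz t z"
    and bd: "\<And>s z. s \<in> {0..T} \<Longrightarrow> z \<in> {0..1} \<Longrightarrow> (z \<le> \<delta> \<or> z \<ge> 1 - \<delta>) \<Longrightarrow> \<bar>x s z\<bar> \<le> D"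
  shows "integral {0..1} (\<lambda>z. ph p D (x T z)) \<le> exp (- 2 * a * T) * integral {0..1} (\<lambda>z. ph p D (x 0 z))"
proof -
  define E where "E s = integral {\<delta>..1-\<delta>} (\<lambda>z. ph p D (x s z))" for s
  define E' where "E' s = integral {\<delta>..1-\<delta>} (\<lambda>z. ph1 p D (x s z) * xt s z)" for s
  have sub: "{\<delta>..1-\<delta>} \<subseteq> {0<..<1}" using del by auto
  have E01: "integral {0..1} (\<lambda>z. ph p D (x s z)) = E s" if s: "s \<in> {0..T}" for s
  proof -
    have "integral {0..1} (\<lambda>z. ph p D (x s z)) =
          integral {0..1} (\<lambda>z. if z \<in> {\<delta>..1-\<delta>} then ph p D (x s z) else 0)"
    proof (rule integral_cong)
      fix z :: real assume z: "z \<in> {0..1}"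
      show "ph p D (x s z) = (if z \<in> {\<delta>..1-\<delta>} then ph p D (x s z) else 0)"
      proof (cases "z \<in> {\<delta>..1-\<delta>}")
        case False
        then have "z \<le> \<delta> \<or> z \<ge> 1 - \<delta>" by auto
        then show ?thesis using bd[OF s z] False by (simp add: ph_zero)
      qed simp
    qed
    also have "\<dots> = integral ({\<delta>..1-\<delta>} \<inter> {0..1}) (\<lambda>z. ph p D (x s z))"
      by (rule integral_restrict_Int)
    also have "{\<delta>..1-\<delta>} \<inter> {0..1} = {\<delta>..1-\<delta>}" using del by auto
    finally show ?thesis by (simp add: E_def)
  qed
  have cphx: "continuous_on S (\<lambda>(s, z). ph p D (x s z))" if "S \<subseteq> {0..} \<times> {0..1}" for S
  proof -
    have "continuous_on S (\<lambda>w. ph p D ((\<lambda>(t,z). x t z) w))"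
      by (rule continuous_on_compose2[OF cont_ph[OF p D] continuous_on_subset[OF cx that]]) auto
    then show ?thesis by (simp add: case_prod_beta)
  qed
  have contE: "continuous_on {0..T} E"
  proof -
    have "continuous_on {0..T} (\<lambda>s. integral (cbox \<delta> (1-\<delta>)) (\<lambda>z. ph p D (x s z)))"
      by (rule integral_continuous_on_param[where f="\<lambda>s z. ph p D (x s z)"])
         (rule cphx, use del in auto)
    then show ?thesis by (simp add: E_def)
  qed
  have dE: "(E has_real_derivative E' s) (at s)" if s: "0 < s" "s < T" for s
  proof -
    define U where "U = {s/2..T}"
    have "((\<lambda>u. integral (cbox \<delta> (1-\<delta>)) (\<lambda>z. ph p D (x u z))) has_field_derivative
           integral (cbox \<delta> (1-\<delta>)) (\<lambda>z. ph1 p D (x s z) * xt s z)) (at s within U)"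
    proof (rule leibniz_rule_field_derivative[where fx="\<lambda>u z. ph1 p D (x u z) * xt u z"])
      fix u z assume u: "u \<in> U" and z: "z \<in> cbox \<delta> (1-\<delta>)"
      have u0: "u > 0" using u s by (auto simp: U_def)
      have z0: "z \<in> {0<..<1}" using z sub by auto
      show "((\<lambda>u. ph p D (x u z)) has_field_derivative ph1 p D (x u z) * xt u z) (at u within U)"
        using DERIV_chain2[OF ph_deriv[OF p D] conjunct1[OF der[OF u0 z0]]]
        by (rule has_field_derivative_at_within)
    next
      fix u assume u: "u \<in> U"
      show "(\<lambda>z. ph p D (x u z)) integrable_on cbox \<delta> (1-\<delta>)"
      proof (rule integrable_continuous)
        have "continuous_on ({u} \<times> cbox \<delta> (1-\<delta>)) (\<lambda>(s, z). ph p D (x s z))"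
          by (rule cphx) (use u s del in \<open>auto simp: U_def\<close>)
        moreover have "continuous_on (cbox \<delta> (1-\<delta>)) (\<lambda>z. (u, z))" by (intro continuous_intros)
        moreover have "(\<lambda>z. (u, z)) ` cbox \<delta> (1-\<delta>) \<subseteq> {u} \<times> cbox \<delta> (1-\<delta>)" by auto
        ultimately have "continuous_on (cbox \<delta> (1-\<delta>)) (\<lambda>z. (\<lambda>(s, z). ph p D (x s z)) (u, z))"
          by (rule continuous_on_compose2)
        then show "continuous_on (cbox \<delta> (1-\<delta>)) (\<lambda>z. ph p D (x u z))" by simp
      qed
    next
      have UU: "U \<times> cbox \<delta> (1-\<delta>) \<subseteq> {0<..} \<times> {0<..<1}" using s sub by (auto simp: U_def)
      have c1: "continuous_on (U \<times> cbox \<delta> (1-\<delta>)) (\<lambda>(u, z). ph1 p D (x u z))"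
      proof -
        have "continuous_on (U \<times> cbox \<delta> (1-\<delta>)) (\<lambda>w. ph1 p D ((\<lambda>(t,z). x t z) w))"
          by (rule continuous_on_compose2[OF cont_ph1[OF p D] continuous_on_subset[OF cx]])
             (use UU in auto)
        then show ?thesis by (simp add: case_prod_beta)
      qed
      have c2: "continuous_on (U \<times> cbox \<delta> (1-\<delta>)) (\<lambda>(u, z). xt u z)"
        using continuous_on_subset[OF cxt UU] .
      show "continuous_on (U \<times> cbox \<delta> (1-\<delta>)) (\<lambda>(u, z). ph1 p D (x u z) * xt u z)"
        using continuous_on_mult[OF c1 c2] by (simp add: case_prod_beta)
    next
      show "s \<in> U" "convex U" using s by (auto simp: U_def)
    qed
    moreover have "at s within U = at s"
      unfolding U_def using s by (intro at_within_Icc_at) auto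
    ultimately show ?thesis unfolding E_def[abs_def] E'_def by simp
  qed
  have E'le: "E' s \<le> - 2 * a * E s" if s: "0 < s" "s < T" for s
  proof -
    have cz: "continuous_on {0<..<1} (xzz s)"
    proof -
      have "continuous_on {0<..<1} (\<lambda>z. (s, z))" by (intro continuous_intros)
      moreover have "(\<lambda>z. (s, z)) ` {0<..<1} \<subseteq> {0<..} \<times> {0<..<1}" using s by auto
      ultimately have "continuous_on {0<..<1} (\<lambda>z. (\<lambda>(t, z). xzz t z) (s, z))"
        by (rule continuous_on_compose2[OF cxzz])
      then show ?thesis by simp
    qed
    have "E' s = integral {\<delta>..1-\<delta>} (\<lambda>z. ph1 p D (x s z) * (a * xzz s z))"
      unfolding E'_def by (rule integral_cong) (use der s sub in auto)
    also have "\<dots> \<le> - 2 * a * E s"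
      unfolding E_def
    proof (rule spatial[OF p D a del])
      show "\<And>z. z \<in> {0<..<1} \<Longrightarrow> (x s has_real_derivative xz s z) (at z)"
        using der s by auto
      show "\<And>z. z \<in> {0<..<1} \<Longrightarrow> (xz s has_real_derivative xzz s z) (at z)"
        using der s by auto
      show "continuous_on {0<..<1} (xzz s)" by (rule cz)
      show "\<bar>x s \<delta>\<bar> \<le> D" "\<bar>x s (1 - \<delta>)\<bar> \<le> D" using bd s del by auto
    qed
    finally show ?thesis .
  qed
  define H where "H u = exp (2 * a * u) * E u" for u
  have "H T \<le> H 0"
  proof (cases "T = 0")
    case False
    then have T0: "0 < T" using T by simp
    have dH: "(H has_real_derivative exp (2 * a * u) * (2 * a) * E u + exp (2 * a * u) * E' u) (at u)"
      if "0 < u" "u < T" for u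
      unfolding H_def
      by (rule DERIV_mult[OF DERIV_chain2[OF DERIV_exp] dE[OF that], THEN DERIV_cong])
         (auto intro!: derivative_eq_intros)
    have cH: "continuous_on {0..T} H"
      unfolding H_def by (intro continuous_intros contE)
    obtain l z where z: "0 < z" "z < T" and dz: "DERIV H z :> l" and eq: "H T - H 0 = (T - 0) * l"
      using MVT[OF T0 cH] dH by (meson real_differentiable_def)
    have "l = exp (2 * a * z) * (2 * a) * E z + exp (2 * a * z) * E' z"
      using DERIV_unique[OF dz dH[OF z]] .
    also have "\<dots> = exp (2 * a * z) * (2 * a * E z + E' z)" by (simp add: algebra_simps)
    also have "\<dots> \<le> 0"
      using E'le[OF z] by (intro mult_nonneg_nonpos) auto
    finally have "l \<le> 0" .
    then have "(T - 0) * l \<le> 0" using T0 by (intro mult_nonneg_nonpos) auto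
    then show ?thesis using eq by linarith
  qed simp
  then have "E T \<le> exp (- 2 * a * T) * E 0"
    unfolding H_def by (simp add: exp_minus field_simps)
  then show ?thesis using E01[of T] E01[of 0] T by simp
qed



lemma final_arith:
  fixes p I A B c :: real
  assumes p: "p > 2" and I: "I \<ge> 0" and A: "A \<ge> 0" and B: "B \<ge> 0" and c: "c \<ge> 0"
    and le: "I \<le> 2 powr p * (A powr p + c * B)"
  shows "I powr (1/p) \<le> 4 * (c powr (1/p) * B powr (1/p)) + 4 * A"
proof -
  let ?r = "1/p"
  have r: "?r > 0" "?r \<le> 1" using p by auto
  have Ap: "A powr p \<ge> 0" by simp
  have cB: "c * B \<ge> 0" using c B by simp
  have "I powr ?r \<le> (2 powr p * (A powr p + c * B)) powr ?r"
    using le I r by (intro powr_mono2) auto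
  also have "\<dots> = 2 * (A powr p + c * B) powr ?r"
    using p Ap cB by (simp add: powr_mult powr_powr)
  also have "(A powr p + c * B) powr ?r \<le> (2 * max (A powr p) (c * B)) powr ?r"
    using r Ap cB by (intro powr_mono2) auto
  also have "\<dots> = 2 powr ?r * max (A powr p) (c * B) powr ?r"
    using Ap cB by (simp add: powr_mult)
  also have "\<dots> \<le> 2 * (A + c powr ?r * B powr ?r)"
  proof (rule mult_mono)
    show "2 powr ?r \<le> 2" using r powr_le_cancel_iff[of 2 ?r 1] by auto
    have m: "max (A powr p) (c * B) powr ?r \<le> (A powr p) powr ?r + (c * B) powr ?r"
      by (cases "A powr p \<le> c * B") (auto simp: max_def)
    have "(A powr p) powr ?r = A" using p A by (simp add: powr_powr)
    moreover have "(c * B) powr ?r = c powr ?r * B powr ?r" using c B by (simp add: powr_mult)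
    ultimately show "max (A powr p) (c * B) powr ?r \<le> A + c powr ?r * B powr ?r"
      using m by simp
  qed (use A in auto)
  finally show ?thesis by (simp add: algebra_simps)
qed



lemma sup_bound:
  fixes d :: "real \<Rightarrow> real"
  assumes "bounded (d ` {0..})" "t \<ge> 0"
  shows "\<And>s. s \<in> {0..t} \<Longrightarrow> \<bar>d s\<bar> \<le> (SUP s\<in>{0..t}. \<bar>d s\<bar>)"
    and "(SUP s\<in>{0..t}. \<bar>d s\<bar>) \<ge> 0"
proof -
  obtain B where B: "\<And>y. y \<in> d ` {0..} \<Longrightarrow> norm y \<le> B"
    using assms(1) by (auto simp: bounded_iff)
  have bdd: "bdd_above ((\<lambda>s. \<bar>d s\<bar>) ` {0..t})"
    by (rule bdd_aboveI[of _ B]) (use B in auto)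
  show *: "\<And>s. s \<in> {0..t} \<Longrightarrow> \<bar>d s\<bar> \<le> (SUP s\<in>{0..t}. \<bar>d s\<bar>)"
    by (rule cSUP_upper[OF _ bdd])
  show "(SUP s\<in>{0..t}. \<bar>d s\<bar>) \<ge> 0"
    using *[of 0] assms(2) by (meson abs_ge_zero atLeastAtMost_iff order.trans order.refl)
qed

lemma int_pow: "continuous_on {0..1} f \<Longrightarrow> (p::real) > 0 \<Longrightarrow> (\<lambda>z. \<bar>f z\<bar> powr p) integrable_on {0..1::real}"
  by (intro integrable_continuous_interval continuous_on_powr' continuous_intros) auto

theorem mainTheorem9:
  fixes a :: real
  assumes "a > 0"
  shows "\<forall>p::real. p > 2 \<longrightarrow>
    (\<exists>M \<sigma> \<gamma> :: real. M > 0 \<and> \<sigma> > 0 \<and> \<gamma> > 0 \<and>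
      (\<forall>x0 d0 d1 (x :: real \<Rightarrow> real \<Rightarrow> real) t.
         C2_on {0..1} x0 \<longrightarrow> admissible x0 d0 d1 \<longrightarrow>
         classical_solution a x0 d0 d1 x \<longrightarrow> t \<ge> 0 \<longrightarrow>
         Lp_norm p (x t) \<le> M * exp (- \<sigma> * t) * Lp_norm p x0
            + \<gamma> * (SUP s\<in>{0..t}. \<bar>d0 s\<bar>) + \<gamma> * (SUP s\<in>{0..t}. \<bar>d1 s\<bar>)))"
proof (intro allI impI)
  fix p :: real assume p: "p > 2"
  have a: "a > 0" by (rule assms)
  show "\<exists>M \<sigma> \<gamma> :: real. M > 0 \<and> \<sigma> > 0 \<and> \<gamma> > 0 \<and>
      (\<forall>x0 d0 d1 (x :: real \<Rightarrow> real \<Rightarrow> real) t.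
         C2_on {0..1} x0 \<longrightarrow> admissible x0 d0 d1 \<longrightarrow>
         classical_solution a x0 d0 d1 x \<longrightarrow> t \<ge> 0 \<longrightarrow>
         Lp_norm p (x t) \<le> M * exp (- \<sigma> * t) * Lp_norm p x0
            + \<gamma> * (SUP s\<in>{0..t}. \<bar>d0 s\<bar>) + \<gamma> * (SUP s\<in>{0..t}. \<bar>d1 s\<bar>))"
  proof (rule exI[of _ 4], rule exI[of _ "2 * a / p"], rule exI[of _ 4], intro conjI allI impI)
    fix x0 d0 d1 :: "real \<Rightarrow> real" and t :: real and x :: "real \<Rightarrow> real \<Rightarrow> real"
    assume C2: "C2_on {0..1} x0" and adm: "admissible x0 d0 d1" and cs: "classical_solution a x0 d0 d1 x" and t: "t \<ge> 0"
    define S0 where "S0 = (SUP s\<in>{0..t}. \<bar>d0 s\<bar>)"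
    define S1 where "S1 = (SUP s\<in>{0..t}. \<bar>d1 s\<bar>)"
    have bd0: "bounded (d0 ` {0..})" and bd1: "bounded (d1 ` {0..})"
      using adm by (auto simp: admissible_def)
    have S0: "\<And>s. s \<in> {0..t} \<Longrightarrow> \<bar>d0 s\<bar> \<le> S0" "S0 \<ge> 0"
      unfolding S0_def using sup_bound[OF bd0 t] by auto
    have S1: "\<And>s. s \<in> {0..t} \<Longrightarrow> \<bar>d1 s\<bar> \<le> S1" "S1 \<ge> 0"
      unfolding S1_def using sup_bound[OF bd1 t] by auto
    have cx: "continuous_on ({0..} \<times> {0..1}) (\<lambda>(t,z). x t z)"
      using cs by (simp add: classical_solution_def)
    obtain xt xz xzz where
      cxt: "continuous_on ({0<..} \<times> {0<..<1}) (\<lambda>(t,z). xt t z)" and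
      cxzz: "continuous_on ({0<..} \<times> {0<..<1}) (\<lambda>(t,z). xzz t z)" and
      der: "\<And>t z. t > 0 \<Longrightarrow> z \<in> {0<..<1} \<Longrightarrow>
           ((\<lambda>s. x s z) has_real_derivative xt t z) (at t) \<and>
           ((\<lambda>y. x t y) has_real_derivative xz t z) (at z) \<and>
           ((\<lambda>y. xz t y) has_real_derivative xzz t z) (at z) \<and>
           xt t z = a * xzz t z"
      using cs unfolding classical_solution_def by blast
    have bc: "\<And>s. s \<ge> 0 \<Longrightarrow> x s 0 = d0 s \<and> x s 1 = d1 s"
      using cs by (simp add: classical_solution_def)
    have ic: "\<And>z. z \<in> {0..1} \<Longrightarrow> x 0 z = x0 z"
      using cs by (simp add: classical_solution_def)
    have cxs: "continuous_on {0..1} (x s)" if "s \<ge> 0" for s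
    proof -
      have "continuous_on {0..1} (\<lambda>z. (s, z))" by (intro continuous_intros)
      moreover have "(\<lambda>z. (s, z)) ` {0..1} \<subseteq> {0..} \<times> {0..1}" using that by auto
      ultimately have "continuous_on {0..1} (\<lambda>z. (\<lambda>(t, z). x t z) (s, z))"
        by (rule continuous_on_compose2[OF cx])
      then show ?thesis by simp
    qed
    define D where "D = S0 + S1"
    have D0: "D \<ge> 0" using S0 S1 by (simp add: D_def)
    define I0 where "I0 = integral {0..1} (\<lambda>z. \<bar>x0 z\<bar> powr p)"
    define It where "It = integral {0..1} (\<lambda>z. \<bar>x t z\<bar> powr p)"
    have ix0: "(\<lambda>z. \<bar>x0 z\<bar> powr p) integrable_on {0..1}"
    proof -
      have "(\<lambda>z. \<bar>x 0 z\<bar> powr p) integrable_on {0..1}"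
        by (rule int_pow[OF cxs]) (use p in auto)
      then show ?thesis using integrable_cong[of "{0..1}" "\<lambda>z. \<bar>x 0 z\<bar> powr p" "\<lambda>z. \<bar>x0 z\<bar> powr p"] ic by auto
    qed
    have I0nn: "I0 \<ge> 0" unfolding I0_def by (rule integral_nonneg[OF ix0]) auto
    have key: "Lp_norm p (x t) \<le> 4 * exp (- (2 * a / p) * t) * Lp_norm p x0 + 4 * D + 4 * \<eta>"
      if eta: "\<eta> > 0" for \<eta>
    proof -
      define D' where "D' = D + \<eta>"
      have D': "D' > 0" using D0 eta by (simp add: D'_def)
      have K: "compact ({0..t} \<times> {0..1::real})" by (intro compact_Times compact_Icc)
      have "uniformly_continuous_on ({0..t} \<times> {0..1}) (\<lambda>(t,z). x t z)"
        by (rule compact_uniformly_continuous[OF continuous_on_subset[OF cx] K]) auto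
      then obtain d where d: "d > 0" and
        dd: "\<And>u v. u \<in> {0..t} \<times> {0..1} \<Longrightarrow> v \<in> {0..t} \<times> {0..1} \<Longrightarrow> dist u v < d \<Longrightarrow>
              dist ((\<lambda>(t,z). x t z) u) ((\<lambda>(t,z). x t z) v) < \<eta>"
        using eta unfolding uniformly_continuous_on_def by metis
      define \<delta> where "\<delta> = min (d/2) (1/4)"
      have del: "0 < \<delta>" "\<delta> < 1/2" using d by (auto simp: \<delta>_def)
      have bd: "\<bar>x s z\<bar> \<le> D'" if s: "s \<in> {0..t}" and z: "z \<in> {0..1}" and zz: "z \<le> \<delta> \<or> z \<ge> 1 - \<delta>" for s z
        using zz
      proof
        assume "z \<le> \<delta>"
        then have "dist (s, z) (s, 0) < d" using z d by (auto simp: dist_Pair_Pair \<delta>_def dist_real_def)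
        then have "dist (x s z) (x s 0) < \<eta>" using dd[of "(s,z)" "(s,0)"] s z by auto
        moreover have "\<bar>x s 0\<bar> \<le> D" using bc[of s] S0(1)[OF s] S1(2) s by (auto simp: D_def)
        ultimately show ?thesis by (auto simp: dist_real_def D'_def)
      next
        assume "z \<ge> 1 - \<delta>"
        then have "dist (s, z) (s, 1) < d" using z d by (auto simp: dist_Pair_Pair \<delta>_def dist_real_def)
        then have "dist (x s z) (x s 1) < \<eta>" using dd[of "(s,z)" "(s,1)"] s z by auto
        moreover have "\<bar>x s 1\<bar> \<le> D" using bc[of s] S1(1)[OF s] S0(2) s by (auto simp: D_def)
        ultimately show ?thesis by (auto simp: dist_real_def D'_def)
      qed
      have dec: "integral {0..1} (\<lambda>z. ph p D' (x t z)) \<le> exp (- 2 * a * t) * integral {0..1} (\<lambda>z. ph p D' (x 0 z))"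
        by (rule decay[OF p _ a del t cx cxt cxzz der bd]) (use D' in auto)
      have cph: "continuous_on {0..1} (\<lambda>z. ph p D' (x s z))" if "s \<ge> 0" for s
        using continuous_on_compose2[OF cont_ph[of p D' UNIV] cxs[OF that]] p D' by auto
      have E0: "integral {0..1} (\<lambda>z. ph p D' (x 0 z)) \<le> I0"
        unfolding I0_def
      proof (rule integral_le)
        show "(\<lambda>z. ph p D' (x 0 z)) integrable_on {0..1}"
          by (rule integrable_continuous_interval[OF cph]) simp
        show "(\<lambda>z. \<bar>x0 z\<bar> powr p) integrable_on {0..1}" by (rule ix0)
        fix z :: real assume "z \<in> {0..1}"
        then show "ph p D' (x 0 z) \<le> \<bar>x0 z\<bar> powr p" using ic ph_le[of p D' "x 0 z"] p D' by auto
      qed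
      have Itle: "It \<le> 2 powr p * (D' powr p + exp (- 2 * a * t) * I0)"
      proof -
        have "It \<le> integral {0..1} (\<lambda>z. 2 powr p * (D' powr p + ph p D' (x t z)))"
          unfolding It_def
        proof (rule integral_le)
          show "(\<lambda>z. \<bar>x t z\<bar> powr p) integrable_on {0..1}"
            by (rule int_pow[OF cxs]) (use t p in auto)
          show "(\<lambda>z. 2 powr p * (D' powr p + ph p D' (x t z))) integrable_on {0..1}"
            by (intro integrable_continuous_interval continuous_intros cph) (use t in auto)
          fix z :: real assume "z \<in> {0..1}"
          show "\<bar>x t z\<bar> powr p \<le> 2 powr p * (D' powr p + ph p D' (x t z))"
            by (rule abs_le_ph) (use p D' in auto)
        qed
        also have "\<dots> = 2 powr p * (D' powr p + integral {0..1} (\<lambda>z. ph p D' (x t z)))"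
        proof -
          have i: "(\<lambda>z. ph p D' (x t z)) integrable_on {0..1}"
            by (rule integrable_continuous_interval[OF cph]) (use t in auto)
          have "integral {0..1} (\<lambda>z. D' powr p + ph p D' (x t z)) = integral {0..1} (\<lambda>z::real. D' powr p) + integral {0..1} (\<lambda>z. ph p D' (x t z))"
            by (intro integral_add i integrable_const_ivl)
          then show ?thesis by simp
        qed
        also have "\<dots> \<le> 2 powr p * (D' powr p + exp (- 2 * a * t) * I0)"
          using dec E0 by (intro mult_left_mono add_left_mono order.trans[OF dec] mult_left_mono) auto
        finally show ?thesis .
      qed
      have Itnn: "It \<ge> 0" unfolding It_def
        by (rule integral_nonneg[OF int_pow[OF cxs]]) (use t p in auto)
      have "Lp_norm p (x t) = It powr (1/p)" by (simp add: Lp_norm_def It_def)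
      also have "\<dots> \<le> 4 * (exp (- 2 * a * t) powr (1/p) * I0 powr (1/p)) + 4 * D'"
        by (rule final_arith[OF p Itnn _ I0nn _ Itle]) (use D' in auto)
      also have "exp (- 2 * a * t) powr (1/p) = exp (- (2 * a / p) * t)"
        by (simp add: exp_powr_real)
      also have "I0 powr (1/p) = Lp_norm p x0" by (simp add: Lp_norm_def I0_def)
      finally show ?thesis by (simp add: D'_def algebra_simps)
    qed
    have "Lp_norm p (x t) \<le> 4 * exp (- (2 * a / p) * t) * Lp_norm p x0 + 4 * D"
    proof (rule field_le_epsilon)
      fix e :: real assume e: "e > 0"
      show "Lp_norm p (x t) \<le> 4 * exp (- (2 * a / p) * t) * Lp_norm p x0 + 4 * D + e"
        using key[of "e/4"] e by simp
    qed
    then show "Lp_norm p (x t) \<le> 4 * exp (- (2 * a / p) * t) * Lp_norm p x0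
            + 4 * (SUP s\<in>{0..t}. \<bar>d0 s\<bar>) + 4 * (SUP s\<in>{0..t}. \<bar>d1 s\<bar>)"
      by (simp add: D_def S0_def S1_def algebra_simps)
  qed (use a p in auto)
qed


end
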